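(* If $\vec \theta \in \Lambda$, then for every index $(\{i, j\},a)$ we have $\theta_{\{i,j\},a} \equiv 0 \pmod{\frac{2\pi}{\nu}}$, where $\nu$ is the order of $a$ in $\mathbb Z_g$. In particular, for all nonzero $a\in\mathbb Z_g$, $\theta_{\{i,j\},a} \equiv 0 \pmod{\frac{2\pi}{g}}$.
   Context: Let $g\ge 2$, $k\ge 2$ be integers, $\mathbb Z_g$ the integers mod $g$, and $d=\binom{k}{2}(g-1)$. Index the coordinates of $\mathbb R^d$ by pairs $(\{i,j\},a)$ with $1\le i<j\le k$ and $a\in\mathbb Z_g\setminus\{0\}$. Define $Z:(\mathbb Z_g)^k\to\mathbb R^d$ by $[Z(\vec x)]_{\{i,j\},a}=1-1/g$ if $x_i-x_j=a$ and $-1/g$ otherwise. Define $\Phi(\vec\theta)=\sum_{\vec x\in(\mathbb Z_g)^k} g^{-k}e^{i\vec\theta\cdot Z(\vec x)}$ for $\vec\theta\in\mathbb R^d$, and $\Lambda=\{\vec\theta\in\mathbb R^d: |\Phi(\vec\theta)|=1\}$. *)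

theory Defs
  imports "HOL-Analysis.Analysis"
begin

text \<open>Z_g is represented by the residues {0..<g}; a vector in (Z_g)^k is an
extensional function on {1..k} with values in {0..<g}.  Coordinates of R^d
are indexed by triples (i,j,a) with 1 <= i < j <= k and 1 <= a <= g-1;
theta is a function of these indices (values outside the index set are irrelevant).\<close>

definition idx :: "nat \<Rightarrow> nat \<Rightarrow> (nat \<times> nat \<times> nat) set" where
  "idx g k = {(i,j,a). 1 \<le> i \<and> i < j \<and> j \<le> k \<and> 1 \<le> a \<and> a < g}"

definition Zvec :: "nat \<Rightarrow> (nat \<Rightarrow> nat) \<Rightarrow> nat \<Rightarrow> nat \<Rightarrow> nat \<Rightarrow> real" where
  "Zvec g x i j a = (if (int (x i) - int (x j)) mod int g = int a
                      then 1 - 1 / real g else - 1 / real g)"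

definition dotZ :: "nat \<Rightarrow> nat \<Rightarrow> (nat \<Rightarrow> nat \<Rightarrow> nat \<Rightarrow> real) \<Rightarrow> (nat \<Rightarrow> nat) \<Rightarrow> real" where
  "dotZ g k \<theta> x = (\<Sum>(i,j,a)\<in>idx g k. \<theta> i j a * Zvec g x i j a)"

definition Phi :: "nat \<Rightarrow> nat \<Rightarrow> (nat \<Rightarrow> nat \<Rightarrow> nat \<Rightarrow> real) \<Rightarrow> complex" where
  "Phi g k \<theta> = (\<Sum>x\<in>PiE {1..k} (\<lambda>_. {0..<g}).
       complex_of_real (1 / real g ^ k) * exp (\<i> * complex_of_real (dotZ g k \<theta> x)))"

definition Lambda :: "nat \<Rightarrow> nat \<Rightarrow> (nat \<Rightarrow> nat \<Rightarrow> nat \<Rightarrow> real) set" where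
  "Lambda g k = {\<theta>. cmod (Phi g k \<theta>) = 1}"

definition ord_mod :: "nat \<Rightarrow> nat \<Rightarrow> nat" where
  "ord_mod g a = (LEAST n. 0 < n \<and> (n * a) mod g = 0)"

end

theory Submission imports Defs "HOL-Analysis.Analysis" begin

definition P2 :: "real \<Rightarrow> bool" where "P2 t \<longleftrightarrow> (\<exists>m::int. t = 2 * pi * of_int m)"

lemma P2_0: "P2 0" unfolding P2_def by (rule exI[of _ 0]) simp
lemma P2_add: "P2 a \<Longrightarrow> P2 b \<Longrightarrow> P2 (a+b)"
  unfolding P2_def by (metis distrib_left of_int_add)
lemma P2_diff: "P2 a \<Longrightarrow> P2 b \<Longrightarrow> P2 (a-b)"
  unfolding P2_def by (metis right_diff_distrib of_int_diff)
lemma P2_mult_nat: "P2 a \<Longrightarrow> P2 (of_nat n * a)"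
  unfolding P2_def by (metis mult.left_commute of_int_mult of_int_of_nat_eq)

lemma unit_sum_eq:
  fixes f :: "'a \<Rightarrow> complex"
  assumes fin: "finite A" and ne: "A \<noteq> {}" and n1: "\<And>x. x\<in>A \<Longrightarrow> norm (f x) = 1"
    and s: "norm (sum f A) = real (card A)" and xA: "x \<in> A"
  shows "f x = sum f A / of_nat (card A)"
proof -
  define N where "N = real (card A)"
  have Npos: "N > 0" using fin ne by (simp add: N_def card_gt_0_iff)
  define w where "w = sum f A / of_real N"
  have nw: "norm w = 1" using s Npos by (simp add: w_def norm_divide N_def)
  have ww: "w * cnj w = 1" using nw complex_norm_square[of w] by simp
  have Sw: "sum f A = w * of_real N" using Npos by (simp add: w_def)
  have "(\<Sum>x\<in>A. Re (cnj w * f x)) = Re (cnj w * sum f A)"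
    by (simp add: sum_distrib_left)
  also have "\<dots> = Re ((w * cnj w) * of_real N)" by (simp add: Sw mult.commute mult.left_commute)
  also have "\<dots> = N" using ww by simp
  finally have e: "(\<Sum>x\<in>A. Re (cnj w * f x)) = N" .
  have le: "Re (cnj w * f y) \<le> 1" if "y \<in> A" for y
    using complex_Re_le_cmod[of "cnj w * f y"] n1[OF that] nw by (simp add: norm_mult)
  have "(\<Sum>y\<in>A. 1 - Re (cnj w * f y)) = 0" using e by (simp add: sum_subtractf N_def)
  hence "\<forall>y\<in>A. 1 - Re (cnj w * f y) = 0"
    using sum_nonneg_eq_0_iff[OF fin, of "\<lambda>y. 1 - Re (cnj w * f y)"] le by auto
  hence r: "Re (cnj w * f x) = 1" using xA by auto
  have "norm (cnj w * f x) = 1" using n1[OF xA] nw by (simp add: norm_mult)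
  hence "Im (cnj w * f x) = 0" using cmod_power2[of "cnj w * f x"] r by simp
  hence z1: "cnj w * f x = 1" using r by (simp add: complex_eq_iff)
  have "f x = w * (cnj w * f x)" using ww by (simp add: mult.assoc[symmetric])
  also have "\<dots> = w" using z1 by simp
  finally show ?thesis by (simp add: w_def N_def)
qed

definition vv :: "nat \<Rightarrow> nat \<Rightarrow> nat \<Rightarrow> nat \<Rightarrow> nat \<Rightarrow> nat \<Rightarrow> nat" where
  "vv k i j s u = (\<lambda>l. if l \<in> {1..k} then (if l = i then s else if l = j then u else 0) else undefined)"

definition Zc :: "nat \<Rightarrow> int \<Rightarrow> nat \<Rightarrow> real" where
  "Zc g t b = (if t mod int g = int b then 1 - 1 / real g else - 1 / real g)"

lemma pointwise:
  assumes "1 \<le> p" "p < q" "q \<le> k" "1 \<le> i" "i < j" "j \<le> k"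
  shows "Zvec g (vv k i j s u) p q b - Zvec g (vv k i j s 0) p q b - Zvec g (vv k i j 0 u) p q b
     + Zvec g (vv k i j 0 0) p q b
   = (if p = i \<and> q = j then Zc g (int s - int u) b - Zc g (int s) b - Zc g (- int u) b + Zc g 0 b else 0)"
proof (cases "p = i \<and> q = j")
  case True thus ?thesis using assms by (simp add: Zvec_def vv_def Zc_def)
next
  case False
  show ?thesis
  proof (cases "p = j \<or> q = j")
    case True
    with False assms have "p \<noteq> i" "q \<noteq> i" by auto
    then show ?thesis using False assms by (simp add: Zvec_def vv_def)
  next
    case F2: False
    then show ?thesis using False assms by (simp add: Zvec_def vv_def)
  qed
qed

lemma finite_idx: "finite (idx g k)"
proof -
  have "idx g k \<subseteq> {1..k} \<times> {1..k} \<times> {1..<g}" by (auto simp: idx_def)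
  thus ?thesis by (rule finite_subset) auto
qed

lemma comb:
  assumes "1 \<le> i" "i < j" "j \<le> k"
  shows "dotZ g k \<theta> (vv k i j s u) - dotZ g k \<theta> (vv k i j s 0) - dotZ g k \<theta> (vv k i j 0 u)
     + dotZ g k \<theta> (vv k i j 0 0)
   = (\<Sum>b\<in>{1..<g}. \<theta> i j b * (Zc g (int s - int u) b - Zc g (int s) b - Zc g (- int u) b + Zc g 0 b))"
proof -
  let ?x1 = "vv k i j s u" and ?x2 = "vv k i j s 0" and ?x3 = "vv k i j 0 u" and ?x4 = "vv k i j 0 0"
  let ?C = "\<lambda>b. Zc g (int s - int u) b - Zc g (int s) b - Zc g (- int u) b + Zc g 0 b"
  have "dotZ g k \<theta> ?x1 - dotZ g k \<theta> ?x2 - dotZ g k \<theta> ?x3 + dotZ g k \<theta> ?x4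
     = (\<Sum>t\<in>idx g k. \<theta> (fst t) (fst (snd t)) (snd (snd t)) *
         (Zvec g ?x1 (fst t) (fst (snd t)) (snd (snd t)) - Zvec g ?x2 (fst t) (fst (snd t)) (snd (snd t))
          - Zvec g ?x3 (fst t) (fst (snd t)) (snd (snd t)) + Zvec g ?x4 (fst t) (fst (snd t)) (snd (snd t))))"
    unfolding dotZ_def by (simp add: sum.distrib sum_subtractf split_def algebra_simps)
  also have "\<dots> = (\<Sum>t\<in>idx g k. if fst t = i \<and> fst (snd t) = j then \<theta> i j (snd (snd t)) * ?C (snd (snd t)) else 0)"
  proof (rule sum.cong[OF refl])
    fix t assume "t \<in> idx g k"
    then obtain p q b where t: "t = (p,q,b)" "1 \<le> p" "p < q" "q \<le> k" by (auto simp: idx_def)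
    show "\<theta> (fst t) (fst (snd t)) (snd (snd t)) *
         (Zvec g ?x1 (fst t) (fst (snd t)) (snd (snd t)) - Zvec g ?x2 (fst t) (fst (snd t)) (snd (snd t))
          - Zvec g ?x3 (fst t) (fst (snd t)) (snd (snd t)) + Zvec g ?x4 (fst t) (fst (snd t)) (snd (snd t)))
        = (if fst t = i \<and> fst (snd t) = j then \<theta> i j (snd (snd t)) * ?C (snd (snd t)) else 0)"
      using pointwise[OF t(2-4) assms, of g s u b] t(1) by (simp del: Zc_def)
  qed
  also have "\<dots> = (\<Sum>t\<in>{t\<in>idx g k. fst t = i \<and> fst (snd t) = j}. \<theta> i j (snd (snd t)) * ?C (snd (snd t)))"
    by (simp add: sum.inter_filter[OF finite_idx])
  also have "{t\<in>idx g k. fst t = i \<and> fst (snd t) = j} = (\<lambda>b. (i,j,b)) ` {1..<g}"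
    using assms by (auto simp: idx_def image_iff)
  also have "(\<Sum>t\<in>(\<lambda>b. (i,j,b)) ` {1..<g}. \<theta> i j (snd (snd t)) * ?C (snd (snd t))) = (\<Sum>b\<in>{1..<g}. \<theta> i j b * ?C b)"
    by (subst sum.reindex) (auto simp: inj_on_def)
  finally show ?thesis .
qed

definition hh :: "nat \<Rightarrow> (nat \<Rightarrow> nat \<Rightarrow> nat \<Rightarrow> real) \<Rightarrow> nat \<Rightarrow> nat \<Rightarrow> int \<Rightarrow> real" where
  "hh g \<theta> i j t = (\<Sum>b\<in>{1..<g}. if t mod int g = int b then \<theta> i j b else 0)"

lemma comb_hh:
  "(\<Sum>b\<in>{1..<g}. \<theta> i j b * (Zc g (int s - int u) b - Zc g (int s) b - Zc g (- int u) b + Zc g 0 b))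
   = hh g \<theta> i j (int s - int u) - hh g \<theta> i j (int s) - hh g \<theta> i j (- int u)"
proof -
  have "(\<Sum>b\<in>{1..<g}. \<theta> i j b * (Zc g (int s - int u) b - Zc g (int s) b - Zc g (- int u) b + Zc g 0 b))
    = (\<Sum>b\<in>{1..<g}. (if (int s - int u) mod int g = int b then \<theta> i j b else 0)
         - (if int s mod int g = int b then \<theta> i j b else 0) - (if (- int u) mod int g = int b then \<theta> i j b else 0))"
    by (rule sum.cong[OF refl]) (auto simp: Zc_def algebra_simps)
  thus ?thesis by (simp add: hh_def sum_subtractf)
qed

lemma hh_val: "1 \<le> a \<Longrightarrow> a < g \<Longrightarrow> hh g \<theta> i j (int a) = \<theta> i j a"
proof -
  assume a: "1 \<le> a" "a < g"
  have "hh g \<theta> i j (int a) = (\<Sum>b\<in>{1..<g}. if a = b then \<theta> i j b else 0)"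
    unfolding hh_def using a by (intro sum.cong) auto
  also have "\<dots> = \<theta> i j a" using a by simp
  finally show ?thesis .
qed

lemma hh_mod: "hh g \<theta> i j (t mod int g) = hh g \<theta> i j t"
  by (simp add: hh_def)

lemma hh_0: "hh g \<theta> i j 0 = 0"
  by (auto simp: hh_def intro!: sum.neutral)

lemma allP2:
  assumes "g \<ge> 1" "\<theta> \<in> Lambda g k"
    and x: "x \<in> PiE {1..k} (\<lambda>_. {0..<g})" and y: "y \<in> PiE {1..k} (\<lambda>_. {0..<g})"
  shows "P2 (dotZ g k \<theta> x - dotZ g k \<theta> y)"
proof -
  let ?P = "PiE {1..k} (\<lambda>_. {0..<g})"
  let ?f = "\<lambda>x. exp (\<i> * complex_of_real (dotZ g k \<theta> x))"
  have cP: "card ?P = g ^ k" by (simp add: card_PiE)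
  have fin: "finite ?P" by (simp add: finite_PiE)
  have ne: "?P \<noteq> {}" using x by auto
  have n1: "norm (?f z) = 1" for z by simp
  have "Phi g k \<theta> = complex_of_real (1 / real g ^ k) * sum ?f ?P"
    by (simp add: Phi_def sum_distrib_left)
  hence "norm (Phi g k \<theta>) = \<bar>1 / real g ^ k\<bar> * norm (sum ?f ?P)"
    by (simp only: norm_mult norm_of_real)
  moreover have "norm (Phi g k \<theta>) = 1" using assms(2) by (simp add: Lambda_def)
  moreover have ab: "\<bar>1 / real g ^ k\<bar> = 1 / real g ^ k" by simp
  ultimately have e1: "1 = (1 / real g ^ k) * norm (sum ?f ?P)" by metis
  have gp: "real g ^ k > 0" using assms(1) by simp
  have "norm (sum ?f ?P) = real g ^ k * ((1 / real g ^ k) * norm (sum ?f ?P))" using gp by simp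
  hence "norm (sum ?f ?P) = real g ^ k" using e1 by simp
  hence s: "norm (sum ?f ?P) = real (card ?P)" using cP by simp
  have "?f x = ?f y" using unit_sum_eq[OF fin ne n1 s x] unit_sum_eq[OF fin ne n1 s y] by simp
  then obtain n :: int where "\<i> * complex_of_real (dotZ g k \<theta> x) = \<i> * complex_of_real (dotZ g k \<theta> y) + (of_int (2 * n) * pi) * \<i>"
    unfolding exp_eq by blast
  hence "Im (\<i> * complex_of_real (dotZ g k \<theta> x)) = Im (\<i> * complex_of_real (dotZ g k \<theta> y) + (of_int (2 * n) * pi) * \<i>)"
    by simp
  hence "dotZ g k \<theta> x - dotZ g k \<theta> y = 2 * pi * of_int n" by simp
  thus ?thesis unfolding P2_def by blast
qed

lemma vv_in: "s < g \<Longrightarrow> u < g \<Longrightarrow> 0 < g \<Longrightarrow> vv k i j s u \<in> PiE {1..k} (\<lambda>_. {0..<g})"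
  by (auto simp: vv_def PiE_def extensional_def)

lemma main_pt:
  assumes g: "g \<ge> 2" and L: "\<theta> \<in> Lambda g k" and ij: "1 \<le> i" "i < j" "j \<le> k"
    and a: "1 \<le> a" "a < g"
  shows "(\<exists>m::int. \<theta> i j a = of_int m * (2 * pi / real (ord_mod g a)))
         \<and> (\<exists>m::int. \<theta> i j a = of_int m * (2 * pi / real g))"
proof -
  let ?h = "hh g \<theta> i j"
  have g0: "0 < g" using g by simp
  have base: "P2 (?h (int s - int u) - ?h (int s) - ?h (- int u))" if "s < g" "u < g" for s u
  proof -
    have "P2 ((dotZ g k \<theta> (vv k i j s u) - dotZ g k \<theta> (vv k i j s 0))
         - (dotZ g k \<theta> (vv k i j 0 u) - dotZ g k \<theta> (vv k i j 0 0)))"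
      using that g0 g L by (intro P2_diff allP2 vv_in) auto
    also have "(dotZ g k \<theta> (vv k i j s u) - dotZ g k \<theta> (vv k i j s 0))
         - (dotZ g k \<theta> (vv k i j 0 u) - dotZ g k \<theta> (vv k i j 0 0))
       = dotZ g k \<theta> (vv k i j s u) - dotZ g k \<theta> (vv k i j s 0) - dotZ g k \<theta> (vv k i j 0 u)
         + dotZ g k \<theta> (vv k i j 0 0)" by simp
    also note comb[OF ij, where g=g and \<theta>=\<theta> and s=s and u=u]
    also note comb_hh[where g=g and \<theta>=\<theta> and i=i and j=j and s=s and u=u]
    finally show ?thesis .
  qed
  have hadd: "P2 (?h (x + y) - ?h x - ?h y)" for x y
  proof -
    define s where "s = nat (x mod int g)"
    define u where "u = nat ((- y) mod int g)"
    have si: "int s = x mod int g" using g0 by (simp add: s_def)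
    have ui: "int u = (- y) mod int g" using g0 by (simp add: u_def)
    have "s < g" "u < g" using g0 by (auto simp: s_def u_def nat_less_iff)
    from base[OF this] have "P2 (?h (int s - int u) - ?h (int s) - ?h (- int u))" .
    moreover have "?h (int s - int u) = ?h (x + y)"
    proof -
      have "?h (int s - int u) = ?h ((int s - int u) mod int g)" by (simp add: hh_mod)
      also have "(int s - int u) mod int g = (x + y) mod int g"
        unfolding si ui by (simp add: mod_diff_eq)
      finally show ?thesis by (simp add: hh_mod)
    qed
    moreover have "?h (int s) = ?h x" unfolding si by (simp add: hh_mod)
    moreover have "?h (- int u) = ?h y"
    proof -
      have "?h (- int u) = ?h ((- int u) mod int g)" by (simp add: hh_mod)
      also have "(- int u) mod int g = y mod int g" unfolding ui by (simp add: mod_minus_eq)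
      finally show ?thesis by (simp add: hh_mod)
    qed
    ultimately show ?thesis by simp
  qed
  have hmul: "P2 (?h (int n * x) - real n * ?h x)" for n x
  proof (induction n)
    case 0 show ?case by (simp add: hh_0 P2_0)
  next
    case (Suc n)
    have "P2 ((?h (int n * x + x) - ?h (int n * x) - ?h x) + (?h (int n * x) - real n * ?h x))"
      using hadd Suc by (intro P2_add)
    thus ?case by (simp add: algebra_simps)
  qed
  have ha: "?h (int a) = \<theta> i j a" using hh_val a by blast
  have conc: "\<exists>m::int. \<theta> i j a = of_int m * (2 * pi / real n)" if n0: "n > 0" and nm: "(n * a) mod g = 0" for n
  proof -
    have "?h (int n * int a) = ?h ((int (n * a)) mod int g)" by (simp add: hh_mod)
    also have "(int (n * a)) mod int g = 0"
    proof -
      have "(int (n * a)) mod int g = int ((n * a) mod g)" by (simp only: zmod_int)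
      thus ?thesis using nm by simp
    qed
    also have "?h 0 = 0" by (rule hh_0)
    finally have h0: "?h (int n * int a) = 0" .
    have "P2 (?h (int n * int a) - real n * ?h (int a))" by (rule hmul)
    hence "P2 (0 - real n * \<theta> i j a)" by (simp only: h0 ha)
    then obtain m :: int where "- real n * \<theta> i j a = 2 * pi * of_int m" by (auto simp: P2_def)
    hence "\<theta> i j a = of_int (- m) * (2 * pi / real n)" using n0 by (auto simp: field_simps)
    thus ?thesis by blast
  qed
  have ex: "0 < g \<and> (g * a) mod g = 0" using g0 by simp
  have "0 < ord_mod g a \<and> (ord_mod g a * a) mod g = 0"
    unfolding ord_mod_def by (rule LeastI[of _ g]) (rule ex)
  hence o: "0 < ord_mod g a" "(ord_mod g a * a) mod g = 0" by auto
  show ?thesis using conc[OF o] conc[OF g0 ex[THEN conjunct2]] by (rule conjI)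
qed

theorem corollary2p4:
  fixes g k :: nat and \<theta> :: "nat \<Rightarrow> nat \<Rightarrow> nat \<Rightarrow> real"
  assumes "g \<ge> 2" and "k \<ge> 2" and "\<theta> \<in> Lambda g k"
  shows "\<forall>(i,j,a)\<in>idx g k.
           (\<exists>m::int. \<theta> i j a = of_int m * (2 * pi / real (ord_mod g a)))
         \<and> (\<exists>m::int. \<theta> i j a = of_int m * (2 * pi / real g))"
  using main_pt[OF assms(1,3)] by (auto simp: idx_def)

end
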